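(* Let $\phi:\mathbb{M}_n\to\mathbb{M}_m$ be a positive linear map with Hilbert–Schmidt adjoint $\phi^*$. The following are equivalent: (1) $\phi(K^*K)\geq\phi(K)^*\phi(K)$ for all $K\in\mathbb{M}_n$; (2) for every positive definite $X\in\mathbb{M}_m$, the block operator \[ \begin{pmatrix} R_{\phi^*(X)} & \phi^*\\ \phi & R_X^{-1}\end{pmatrix}\in B(\mathcal{H}_n\oplus\mathcal{H}_m) \] is positive semidefinite.
   Context: $\mathcal{H}_n$ denotes $\mathbb{M}_n$ (complex $n\times n$ matrices) equipped with the Hilbert–Schmidt inner product $\langle A,B\rangle=\mathrm{Tr}[A^*B]$; $\phi$ is viewed as an operator $\mathcal{H}_n\to\mathcal{H}_m$ and $\phi^*:\mathcal{H}_m\to\mathcal{H}_n$ is its adjoint. For $X\in\mathbb{M}_k$, $R_X$ is the operator on $\mathcal{H}_k$ given by $R_X(A)=AX$. The block operator has $R_{\phi^*(X)}$ acting on $\mathcal{H}_n$, $\phi^*$ mapping $\mathcal{H}_m\to\mathcal{H}_n$, $\phi$ mapping $\mathcal{H}_n\to\mathcal{H}_m$, and $R_X^{-1}$ acting on $\mathcal{H}_m$. A positive map sends positive semidefinite matrices to positive semidefinite matrices. *)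

theory Defs
  imports "HOL-Analysis.Analysis"
begin

definition cnonneg :: "complex \<Rightarrow> bool" where
  "cnonneg z \<longleftrightarrow> Im z = 0 \<and> 0 \<le> Re z"

definition cadj :: "complex^'k^'k \<Rightarrow> complex^'k^'k" where
  "cadj A = (\<chi> i j. cnj (A $ j $ i))"

text \<open>Hilbert-Schmidt inner product Tr[A^* B].\<close>
definition hs :: "complex^'k^'k \<Rightarrow> complex^'k^'k \<Rightarrow> complex" where
  "hs A B = (\<Sum>i\<in>UNIV. \<Sum>j\<in>UNIV. cnj (A $ i $ j) * B $ i $ j)"

definition csmult :: "complex \<Rightarrow> complex^'k^'k \<Rightarrow> complex^'k^'k" where
  "csmult c A = (\<chi> i j. c * A $ i $ j)"

definition clin :: "(complex^'k^'k \<Rightarrow> complex^'l^'l) \<Rightarrow> bool" where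
  "clin f \<longleftrightarrow> (\<forall>A B. f (A + B) = f A + f B) \<and> (\<forall>c A. f (csmult c A) = csmult c (f A))"

definition psd :: "complex^'k^'k \<Rightarrow> bool" where
  "psd A \<longleftrightarrow> (\<forall>x::complex^'k. cnonneg (\<Sum>i\<in>UNIV. cnj (x $ i) * (A *v x) $ i))"

definition pd :: "complex^'k^'k \<Rightarrow> bool" where
  "pd A \<longleftrightarrow> (\<forall>x::complex^'k. x \<noteq> 0 \<longrightarrow>
      (let z = (\<Sum>i\<in>UNIV. cnj (x $ i) * (A *v x) $ i) in Im z = 0 \<and> 0 < Re z))"

definition positive_map :: "(complex^'k^'k \<Rightarrow> complex^'l^'l) \<Rightarrow> bool" where
  "positive_map f \<longleftrightarrow> (\<forall>A. psd A \<longrightarrow> psd (f A))"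

definition is_hs_adjoint :: "(complex^'l^'l \<Rightarrow> complex^'k^'k) \<Rightarrow> (complex^'k^'k \<Rightarrow> complex^'l^'l) \<Rightarrow> bool" where
  "is_hs_adjoint psi phi \<longleftrightarrow> (\<forall>X Y. hs (psi Y) X = hs Y (phi X))"

definition Rmul :: "complex^'k^'k \<Rightarrow> complex^'k^'k \<Rightarrow> complex^'k^'k" where
  "Rmul X A = A ** X"

text \<open>The block operator [[R_{phi^*(X)}, phi^*],[phi, R_X^{-1}]] on H_n (+) H_m;
  R_X^{-1} = R_{X^{-1}}.\<close>
definition block_op ::
  "(complex^'n^'n \<Rightarrow> complex^'m^'m) \<Rightarrow> (complex^'m^'m \<Rightarrow> complex^'n^'n) \<Rightarrow> complex^'m^'m
   \<Rightarrow> ((complex^'n^'n) \<times> (complex^'m^'m)) \<Rightarrow> ((complex^'n^'n) \<times> (complex^'m^'m))" where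
  "block_op phi psi X = (\<lambda>(A, B). (Rmul (psi X) A + psi B, phi A + Rmul (matrix_inv X) B))"

definition psd_op_sum ::
  "(((complex^'n^'n) \<times> (complex^'m^'m)) \<Rightarrow> ((complex^'n^'n) \<times> (complex^'m^'m))) \<Rightarrow> bool" where
  "psd_op_sum T \<longleftrightarrow> (\<forall>v. cnonneg (hs (fst v) (fst (T v)) + hs (snd v) (snd (T v))))"

end

theory Submission
  imports Defs
begin

definition tr :: "complex^'k^'k \<Rightarrow> complex" where "tr A = (\<Sum>i\<in>UNIV. A$i$i)"
definition outer :: "complex^'k \<Rightarrow> complex^'k^'k" where "outer v = (\<chi> i j. v$i * cnj (v$j))"
definition qf :: "complex^'k^'k \<Rightarrow> complex^'k \<Rightarrow> complex" where
  "qf A x = (\<Sum>i\<in>UNIV. cnj (x $ i) * (A *v x) $ i)"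
definition bf :: "complex^'k^'k \<Rightarrow> complex^'k \<Rightarrow> complex^'k \<Rightarrow> complex" where
  "bf A x y = (\<Sum>i\<in>UNIV. cnj (x $ i) * (A *v y) $ i)"
definition ek :: "'k \<Rightarrow> complex^'k" where "ek k = (\<chi> i. if i = k then 1 else 0)"
lemma ite10m: "(if P then 1 else 0) * (a::complex) = (if P then a else 0)" "a * (if P then 1 else 0) = (if P then a else 0)" "cnj (if P then 1 else 0) = (if P then 1 else 0)" by simp_all

lemma psd_qf: "psd A \<longleftrightarrow> (\<forall>x. cnonneg (qf A x))" by (simp add: psd_def qf_def)
lemma qf_bf: "qf A x = bf A x x" by (simp add: qf_def bf_def)

lemma bf_add1: "bf A (x + y) z = bf A x z + bf A y z"
  by (simp add: bf_def sum.distrib algebra_simps)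
lemma bf_add2: "bf A x (y + z) = bf A x y + bf A x z"
  by (simp add: bf_def sum.distrib algebra_simps matrix_vector_mult_def)
lemma bf_smult1: "bf A (c *s x) z = cnj c * bf A x z"
  by (simp add: bf_def sum_distrib_left algebra_simps)
lemma bf_smult2: "bf A x (c *s z) = c * bf A x z"
  by (simp add: bf_def sum_distrib_left algebra_simps matrix_vector_mult_def)
lemma bf_ek: "bf A (ek i) (ek j) = A$i$j"
  by (simp add: bf_def ek_def matrix_vector_mult_def ite10m)
lemma bf_ek1: "bf A (ek k) v = (A *v v)$k"
  by (simp add: bf_def ek_def ite10m)
lemma bf_ek2: "bf A v (ek k) = (\<Sum>i\<in>UNIV. cnj (v$i) * A$i$k)"
  by (simp add: bf_def ek_def matrix_vector_mult_def ite10m)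

lemma cnonneg_add: "cnonneg a \<Longrightarrow> cnonneg b \<Longrightarrow> cnonneg (a + b)" by (simp add: cnonneg_def)
lemma cnonneg_cnj: "cnonneg (cnj a) = cnonneg a" by (simp add: cnonneg_def)
lemma cnonneg_sum: "(\<And>i. i \<in> S \<Longrightarrow> cnonneg (f i)) \<Longrightarrow> cnonneg (sum f S)"
  by (induction S rule: infinite_finite_induct) (auto simp: cnonneg_def Re_sum Im_sum intro: sum_nonneg)

lemma psd_herm:
  assumes "psd A" shows "A$i$j = cnj (A$j$i)"
proof -
  have q: "\<And>x. Im (bf A x x) = 0 \<and> Re (bf A x x) \<ge> 0" using assms by (simp add: psd_qf qf_bf cnonneg_def)
  have 1: "bf A (ek i + ek j) (ek i + ek j) = A$i$i + A$i$j + A$j$i + A$j$j"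
    by (simp add: bf_add1 bf_add2 bf_ek)
  have 2: "bf A (ek i + \<i> *s ek j) (ek i + \<i> *s ek j) = A$i$i + \<i> * A$i$j - \<i> * A$j$i + A$j$j"
    by (simp add: bf_add1 bf_add2 bf_ek bf_smult1 bf_smult2 algebra_simps)
  have "Im (A$i$i) = 0" "Im (A$j$j) = 0" using q[of "ek i"] q[of "ek j"] by (simp_all add: bf_ek)
  moreover have "Im (A$i$i + A$i$j + A$j$i + A$j$j) = 0" using q 1 by metis
  moreover have "Im (A$i$i + \<i> * A$i$j - \<i> * A$j$i + A$j$j) = 0" using q 2 by metis
  ultimately show ?thesis by (simp add: complex_eq_iff)
qed

lemma qf_diff: "qf (A - B) v = qf A v - qf B v"
  by (simp add: qf_def matrix_vector_mult_def sum_subtractf algebra_simps)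
lemma qf_csmult: "qf (csmult a A) v = a * qf A v"
  by (simp add: qf_def csmult_def matrix_vector_mult_def sum_distrib_left algebra_simps)
lemma qf_outer: "qf (outer x) v = (\<Sum>i\<in>UNIV. cnj (v$i) * x$i) * (\<Sum>j\<in>UNIV. cnj (x$j) * v$j)"
  by (simp add: qf_def outer_def matrix_vector_mult_def sum_distrib_left sum_distrib_right algebra_simps)
lemma hs_add2: "hs P (A + B) = hs P A + hs P B"
  by (simp add: hs_def sum.distrib algebra_simps)
lemma hs_diff2: "hs P (A - B) = hs P A - hs P B"
  by (simp add: hs_def sum_subtractf algebra_simps)
lemma hs_csmult2: "hs P (csmult a B) = a * hs P B"
  by (simp add: hs_def csmult_def sum_distrib_left algebra_simps)
lemma hs_outer: "hs P (outer v) = cnj (qf P v)"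
  by (simp add: hs_def qf_def outer_def matrix_vector_mult_def sum_distrib_left algebra_simps)
lemma qf_expand: "qf X (v + t *s ek k) = qf X v + t * bf X v (ek k) + cnj t * bf X (ek k) v + cnj t * t * X$k$k"
  by (simp add: qf_bf bf_add1 bf_add2 bf_smult1 bf_smult2 bf_ek algebra_simps)

lemma psd_diag: "psd X \<Longrightarrow> cnonneg (X$k$k)"
  using bf_ek[of X k k] by (metis psd_qf qf_bf)

lemma psd_zero_diag:
  assumes "psd X" "X$k$k = 0" shows "X$i$k = 0"
proof (rule ccontr)
  assume ne: "X$i$k \<noteq> 0"
  define a where "a = X$i$k"
  have h: "X$k$i = cnj a" using psd_herm[OF assms(1), of k i] by (simp add: a_def)
  have b2: "bf X (ek i) (ek k) = a" "bf X (ek k) (ek i) = cnj a" using h by (simp_all add: bf_ek a_def)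
  define r where "r = (Re (X$i$i) + 1) / (2 * (cmod a)^2)"
  have pos: "cmod a > 0" using ne a_def by simp
  define t where "t = - complex_of_real r * cnj a"
  have "cnonneg (qf X (ek i + t *s ek k))" using assms(1) by (simp add: psd_qf)
  moreover have "qf X (ek i + t *s ek k) = X$i$i + t * a + cnj t * cnj a"
    by (subst qf_expand) (simp add: qf_bf bf_ek b2 assms(2) h a_def[symmetric])
  ultimately have "Re (X$i$i + t * a + cnj t * cnj a) \<ge> 0"
    by (simp add: cnonneg_def)
  moreover have "Re (t * a) = - (r * (cmod a)^2)" "Re (cnj t * cnj a) = - (r * (cmod a)^2)"
    unfolding cmod_power2 by (simp_all add: t_def power2_eq_square algebra_simps)
  moreover have "r * (cmod a)^2 = (Re (X$i$i) + 1) / 2" using pos by (simp add: r_def)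
  ultimately show False by (simp only: plus_complex.sel) (simp add: field_simps)
qed

definition supp :: "'k set \<Rightarrow> complex^'k^'k \<Rightarrow> bool" where
  "supp S X \<longleftrightarrow> (\<forall>i j. i \<notin> S \<or> j \<notin> S \<longrightarrow> X$i$j = 0)"

lemma schur_psd:
  assumes "psd X" "c = X$k$k" "c \<noteq> 0" "x = (\<chi> i. X$i$k)"
  shows "psd (X - csmult (1/c) (outer x))"
  unfolding psd_qf
proof
  fix v
  define s where "s = (X *v v)$k"
  have cr: "cnj c = c" using psd_diag[OF assms(1), of k] assms(2) by (simp add: cnonneg_def complex_eq_iff)
  have hA: "\<And>j. cnj (X$j$k) = X$k$j" "\<And>j. cnj (X$k$j) = X$j$k"
    using psd_herm[OF assms(1)] by (metis complex_cnj_cnj)+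
  have s1: "(\<Sum>j\<in>UNIV. cnj (x$j) * v$j) = s"
    by (simp add: assms(4) s_def matrix_vector_mult_def hA)
  have s2: "(\<Sum>i\<in>UNIV. cnj (v$i) * x$i) = cnj s"
    by (simp add: assms(4) s_def matrix_vector_mult_def hA mult.commute)
  have b1: "bf X v (ek k) = cnj s" using s2 by (simp add: bf_ek2 assms(4))
  have b2: "bf X (ek k) v = s" by (simp add: bf_ek1 s_def)
  define t where "t = - s / c"
  have ct: "cnj t = - cnj s / c" using cr by (simp add: t_def)
  have "qf X (v + t *s ek k) = qf X v - s * cnj s / c"
    unfolding qf_expand b1 b2 ct assms(2)[symmetric] using assms(3)
    by (simp add: t_def field_simps)
  also have "\<dots> = qf (X - csmult (1/c) (outer x)) v"
    by (simp add: qf_diff qf_csmult qf_outer s1 s2)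
  finally show "cnonneg (qf (X - csmult (1/c) (outer x)) v)"
    using assms(1) by (metis psd_qf)
qed

lemma cnonneg_mult: "cnonneg a \<Longrightarrow> cnonneg b \<Longrightarrow> cnonneg (a * b)" by (simp add: cnonneg_def)

lemma psd_hs_aux:
  assumes P: "psd P" and "finite S"
  shows "\<forall>X. psd X \<and> supp S X \<longrightarrow> cnonneg (hs P X)"
  using assms(2)
proof (induction S rule: finite_induct)
  case empty
  show ?case
  proof (intro allI impI)
    fix X :: "complex^'a^'a" assume "psd X \<and> supp {} X"
    then have "X = 0" by (simp add: supp_def vec_eq_iff)
    then show "cnonneg (hs P X)" by (simp add: hs_def cnonneg_def)
  qed
next
  case (insert k S)
  show ?case
  proof (intro allI impI)
    fix X :: "complex^'a^'a" assume X: "psd X \<and> supp (insert k S) X"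
    define c where "c = X$k$k"
    show "cnonneg (hs P X)"
    proof (cases "c = 0")
      case True
      have z1: "X$i$k = 0" for i using psd_zero_diag[of X k i] X True c_def by simp
      have z2: "X$k$i = 0" for i using z1[of i] psd_herm[of X k i] X by simp
      have "supp S X" using X z1 z2 unfolding supp_def by (metis insertE)
      then show ?thesis using insert.IH X by blast
    next
      case False
      define x where "x = (\<chi> i. X$i$k)"
      define X' where "X' = X - csmult (1/c) (outer x)"
      have pX': "psd X'" using schur_psd[of X c k x] X False c_def x_def X'_def by simp
      have cr: "cnj c = c" "cnonneg c" using psd_diag[of X k] X c_def by (simp_all add: cnonneg_def complex_eq_iff)
      have hA: "\<And>j. cnj (X$j$k) = X$k$j" using X psd_herm[of X] by (metis complex_cnj_cnj)
      have "supp S X'" unfolding supp_def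
      proof (intro allI impI)
        fix i j assume ij: "i \<notin> S \<or> j \<notin> S"
        have e: "X'$i$j = X$i$j - (1/c) * (X$i$k * cnj (X$j$k))"
          by (simp add: X'_def csmult_def outer_def x_def)
        show "X'$i$j = 0"
        proof (cases "i = k")
          case True then show ?thesis using e False by (simp add: hA c_def)
        next
          case ik: False
          show ?thesis
          proof (cases "j = k")
            case True then show ?thesis using e False cr(1) by (simp add: c_def)
          next
            case jk: False
            have "i \<notin> insert k S \<or> j \<notin> insert k S" using ij ik jk by auto
            then have "X$i$j = 0" "X$i$k = 0 \<or> X$j$k = 0" using X unfolding supp_def by auto
            then show ?thesis using e by auto
          qed
        qed
      qed
      then have h1: "cnonneg (hs P X')" using insert.IH pX' by blast
      have "X = X' + csmult (1/c) (outer x)" by (simp add: X'_def)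
      then have "hs P X = hs P X' + (1/c) * cnj (qf P x)" by (simp add: hs_add2 hs_csmult2 hs_outer)
      moreover have "cnonneg (1/c)" using cr(2) by (simp add: cnonneg_def Re_divide Im_divide)
      moreover have "cnonneg (cnj (qf P x))" using P by (simp add: psd_qf cnonneg_cnj)
      ultimately show ?thesis using h1 cnonneg_add cnonneg_mult by metis
    qed
  qed
qed

lemma psd_hs: "psd P \<Longrightarrow> psd X \<Longrightarrow> cnonneg (hs P X)"
  using psd_hs_aux[of P UNIV] by (simp add: supp_def)

lemma mm_add_r: "((A::complex^'k^'k) + B) ** C = A ** C + B ** C"
  by (simp add: matrix_matrix_mult_def vec_eq_iff sum.distrib algebra_simps)
lemma tr_add: "tr (A + B) = tr A + tr B" by (simp add: tr_def sum.distrib)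
lemma tr_comm: "tr ((A::complex^'k^'k) ** B) = tr (B ** A)"
  unfolding tr_def matrix_matrix_mult_def by (simp, subst sum.swap) (simp add: mult.commute)
lemma cadj_mult: "cadj ((A::complex^'k^'k) ** B) = cadj B ** cadj A"
  by (simp add: cadj_def matrix_matrix_mult_def vec_eq_iff mult.commute)
lemma cadj_add: "cadj (A + B) = cadj A + cadj B" by (simp add: cadj_def vec_eq_iff)
lemma cadj_cadj: "cadj (cadj A) = A" by (simp add: cadj_def vec_eq_iff)
lemma hs_tr: "hs A B = tr (cadj A ** B)"
  unfolding hs_def tr_def cadj_def matrix_matrix_mult_def by (simp, subst sum.swap) simp
lemma hs_cnj: "hs A B = cnj (hs B A)"
  by (simp add: hs_def mult.commute)
lemma hs_diff1: "hs (A - B) C = hs A C - hs B C"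
  by (simp add: hs_def sum_subtractf algebra_simps)
lemma psd_cadj: assumes "psd A" shows "cadj A = A"
proof -
  have "\<And>i j. cnj (A$j$i) = A$i$j" using psd_herm[OF assms] by (metis complex_cnj_cnj)
  then show ?thesis by (simp add: cadj_def vec_eq_iff)
qed
lemma pd_psd: "pd X \<Longrightarrow> psd X"
  unfolding psd_qf
proof
  fix x assume "pd X"
  show "cnonneg (qf X x)"
  proof (cases "x = 0")
    case True then show ?thesis by (simp add: qf_def cnonneg_def)
  next
    case False then show ?thesis using \<open>pd X\<close> unfolding pd_def Let_def qf_def cnonneg_def
      by (metis less_eq_real_def)
  qed
qed

lemma pd_inv:
  assumes "pd X" shows "X ** matrix_inv X = mat 1" "matrix_inv X ** X = mat 1"
proof -
  have "\<forall>x. X *v x = 0 \<longrightarrow> x = 0"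
  proof (intro allI impI)
    fix x assume "X *v x = 0"
    then show "x = 0" using assms unfolding pd_def Let_def by auto
  qed
  then have "invertible X" using matrix_left_invertible_ker invertible_left_inverse by blast
  then obtain B where "X ** B = mat 1 \<and> B ** X = mat 1" unfolding invertible_def by blast
  then have "X ** matrix_inv X = mat 1 \<and> matrix_inv X ** X = mat 1"
    unfolding matrix_inv_def by (rule someI)
  then show "X ** matrix_inv X = mat 1" "matrix_inv X ** X = mat 1" by auto
qed

lemma pd_inv_psd:
  assumes "pd X" shows "psd (matrix_inv X)"
  unfolding psd_qf
proof
  fix v
  define w where "w = matrix_inv X *v v"
  have v: "v = X *v w" by (simp add: w_def matrix_vector_mul_assoc pd_inv[OF assms])
  have "qf (matrix_inv X) v = cnj (qf X w)"
    by (simp add: qf_def v matrix_vector_mul_assoc pd_inv[OF assms] mult.commute)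
  then show "cnonneg (qf (matrix_inv X) v)" using pd_psd[OF assms] by (simp add: psd_qf cnonneg_cnj)
qed

lemma hs_DY: assumes "psd Y" shows "cnonneg (hs D (D ** Y))"
proof -
  have "hs D (D ** Y) = (\<Sum>i\<in>UNIV. qf Y (\<chi> l. cnj (D$i$l)))"
    unfolding hs_def qf_def matrix_matrix_mult_def matrix_vector_mult_def
    apply (rule sum.cong[OF refl])
    apply (simp add: sum_distrib_left)
    apply (subst sum.swap)
    apply (simp add: algebra_simps)
    done
  then show ?thesis using assms by (simp add: psd_qf cnonneg_sum)
qed

lemma psd_AA: "psd (cadj A ** A)"
  unfolding psd_qf
proof
  fix x
  define y where "y = A *v x"
  have "qf (cadj A ** A) x = (\<Sum>i\<in>UNIV. cnj (x$i) * (cadj A *v y)$i)"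
    by (simp add: qf_def y_def matrix_vector_mul_assoc)
  also have "\<dots> = (\<Sum>i\<in>UNIV. \<Sum>l\<in>UNIV. cnj (x$i) * cnj (A$l$i) * y$l)"
    by (simp add: cadj_def matrix_vector_mult_def sum_distrib_left mult.assoc)
  also have "\<dots> = (\<Sum>l\<in>UNIV. \<Sum>i\<in>UNIV. cnj (x$i) * cnj (A$l$i) * y$l)"
    by (rule sum.swap)
  also have "\<dots> = (\<Sum>l\<in>UNIV. (\<Sum>i\<in>UNIV. cnj (x$i) * cnj (A$l$i)) * y$l)"
    by (simp add: sum_distrib_right)
  also have "\<dots> = (\<Sum>l\<in>UNIV. cnj (y$l) * y$l)"
    by (simp add: y_def matrix_vector_mult_def mult.commute)
  also have "cnonneg \<dots>" by (rule cnonneg_sum) (simp add: cnonneg_def)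
  finally show "cnonneg (qf (cadj A ** A) x)" .
qed

lemma cadj_diff: "cadj (A - B) = cadj A - cadj B" by (simp add: cadj_def vec_eq_iff)

lemma key:
  fixes phi :: "complex^'n::finite^'n \<Rightarrow> complex^'m::finite^'m"
    and psi :: "complex^'m^'m \<Rightarrow> complex^'n^'n"
  assumes adj: "is_hs_adjoint psi phi" and X: "pd X"
  shows "hs A (A ** psi X + psi B) + hs B (phi A + B ** matrix_inv X)
       = hs (phi (cadj A ** A) - cadj (phi A) ** phi A) X
         + hs (phi A ** X + B) ((phi A ** X + B) ** matrix_inv X)"
proof -
  define G where "G = phi (cadj A ** A)"
  define F where "F = phi A"
  define Y where "Y = matrix_inv X"
  have XY: "X ** Y = mat 1" "Y ** X = mat 1" using pd_inv[OF X] by (simp_all add: Y_def)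
  have cX: "cadj X = X" using psd_cadj[OF pd_psd[OF X]] .
  have h1: "hs A (A ** psi X) = hs G X"
  proof -
    have "hs A (A ** psi X) = cnj (hs (A ** psi X) A)" by (rule hs_cnj)
    also have "\<dots> = cnj (hs (psi X) (cadj A ** A))"
      by (simp add: hs_tr cadj_mult matrix_mul_assoc)
    also have "\<dots> = cnj (hs X G)" using adj by (simp add: is_hs_adjoint_def G_def)
    also have "\<dots> = hs G X" by (simp add: hs_cnj[of G X])
    finally show ?thesis .
  qed
  have h2: "hs A (psi B) = hs F B"
  proof -
    have "hs A (psi B) = cnj (hs (psi B) A)" by (rule hs_cnj)
    also have "\<dots> = cnj (hs B F)" using adj by (simp add: is_hs_adjoint_def F_def)
    also have "\<dots> = hs F B" by (simp add: hs_cnj[of F B])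
    finally show ?thesis .
  qed
  have h3: "hs (cadj F ** F) X = tr (cadj F ** F ** X)"
    by (simp add: hs_tr cadj_mult cadj_cadj matrix_mul_assoc)
  have DY: "(F ** X + B) ** Y = F + B ** Y"
    by (simp add: mm_add_r XY matrix_mul_assoc[symmetric])
  have h4: "hs (F ** X + B) ((F ** X + B) ** Y) = tr (cadj F ** F ** X) + hs F B + hs B F + hs B (B ** Y)"
  proof -
    have "hs (F ** X + B) ((F ** X + B) ** Y) = tr ((X ** cadj F + cadj B) ** (F + B ** Y))"
      by (simp add: DY hs_tr cadj_add cadj_mult cX)
    also have "\<dots> = tr (X ** (cadj F ** F)) + tr (X ** (cadj F ** (B ** Y))) + tr (cadj B ** F) + tr (cadj B ** (B ** Y))"
      by (simp add: mm_add_r matrix_add_ldistrib tr_add matrix_mul_assoc)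
    also have "tr (X ** (cadj F ** F)) = tr (cadj F ** F ** X)" by (rule tr_comm)
    also have "tr (X ** (cadj F ** (B ** Y))) = tr (cadj F ** (B ** Y) ** X)" by (rule tr_comm)
    also have "cadj F ** (B ** Y) ** X = cadj F ** B" by (simp add: matrix_mul_assoc[symmetric] XY)
    finally show ?thesis by (simp add: hs_tr)
  qed
  show ?thesis
    unfolding G_def[symmetric] F_def[symmetric] Y_def[symmetric]
    by (simp add: hs_add2 h1 h2 h3 h4 hs_diff1)
qed

lemma qf_herm:
  assumes "cadj P = P" shows "cnj (qf P x) = qf P x"
proof -
  have "cnj (qf P x) = (\<Sum>i\<in>UNIV. \<Sum>j\<in>UNIV. x$i * cnj (P$i$j) * cnj (x$j))"
    by (simp add: qf_def matrix_vector_mult_def sum_distrib_left mult.assoc)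
  also have "\<dots> = (\<Sum>j\<in>UNIV. \<Sum>i\<in>UNIV. x$i * cnj (P$i$j) * cnj (x$j))" by (rule sum.swap)
  also have "\<dots> = (\<Sum>j\<in>UNIV. \<Sum>i\<in>UNIV. cnj (x$j) * (cadj P)$j$i * x$i)"
    by (simp add: cadj_def mult.commute mult.left_commute)
  also have "\<dots> = qf P x" unfolding assms
    by (simp add: qf_def matrix_vector_mult_def sum_distrib_left mult.assoc)
  finally show ?thesis .
qed

lemma cnj_mult_self: "cnj a * a = complex_of_real ((Re a)^2 + (Im a)^2)"
  by (simp add: complex_eq_iff power2_eq_square)

lemma qf_add: "qf (A + B) v = qf A v + qf B v"
  by (simp add: qf_def matrix_vector_mult_def sum.distrib algebra_simps)

lemma pd_eps:
  fixes x :: "complex^'k::finite"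
  assumes "e > 0" shows "pd (outer x + csmult (complex_of_real e) (mat 1))"
  unfolding pd_def Let_def
proof (intro allI impI)
  fix v :: "complex^'k" assume v: "v \<noteq> 0"
  define s where "s = (\<Sum>j\<in>UNIV. cnj (x$j) * v$j)"
  have s': "(\<Sum>i\<in>UNIV. cnj (v$i) * x$i) = cnj s" by (simp add: s_def mult.commute)
  have m1: "qf (mat 1) v = complex_of_real (\<Sum>i\<in>UNIV. (Re (v$i))^2 + (Im (v$i))^2)"
    by (simp add: qf_def cnj_mult_self)
  obtain i where vi: "v$i \<noteq> 0" using v by (metis vec_eq_iff zero_index)
  have "(Re (v$i))^2 + (Im (v$i))^2 > 0" using vi by (simp add: complex_eq_iff sum_power2_gt_zero_iff)
  then have pos: "(\<Sum>i\<in>UNIV. (Re (v$i))^2 + (Im (v$i))^2) > 0"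
    by (meson UNIV_I add_nonneg_nonneg finite sum_pos2 zero_le_power2)
  have "qf (outer x + csmult (complex_of_real e) (mat 1)) v
      = complex_of_real ((Re s)^2 + (Im s)^2 + e * (\<Sum>i\<in>UNIV. (Re (v$i))^2 + (Im (v$i))^2))"
    by (simp add: qf_add qf_csmult qf_outer s' s_def[symmetric] m1 cnj_mult_self)
  moreover have "(Re s)^2 + (Im s)^2 + e * (\<Sum>i\<in>UNIV. (Re (v$i))^2 + (Im (v$i))^2) > 0"
    using pos assms by (simp add: add_nonneg_pos)
  ultimately show "Im (\<Sum>i\<in>UNIV. cnj (v $ i) * ((outer x + csmult (complex_of_real e) (mat 1)) *v v) $ i) = 0 \<and>
          0 < Re (\<Sum>i\<in>UNIV. cnj (v $ i) * ((outer x + csmult (complex_of_real e) (mat 1)) *v v) $ i)"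
    by (simp add: qf_def)
qed

theorem theorem4p1:
  fixes phi :: "complex^'n::finite^'n \<Rightarrow> complex^'m::finite^'m"
    and psi :: "complex^'m^'m \<Rightarrow> complex^'n^'n"
  assumes "clin phi"
    and "positive_map phi"
    and "is_hs_adjoint psi phi"
  shows "(\<forall>K. psd (phi (cadj K ** K) - cadj (phi K) ** phi K))
     \<longleftrightarrow> (\<forall>X. pd X \<longrightarrow> psd_op_sum (block_op phi psi X))"
proof
  assume H1: "\<forall>K. psd (phi (cadj K ** K) - cadj (phi K) ** phi K)"
  show "\<forall>X. pd X \<longrightarrow> psd_op_sum (block_op phi psi X)"
  proof (intro allI impI)
    fix X :: "complex^'m^'m" assume X: "pd X"
    show "psd_op_sum (block_op phi psi X)"
      unfolding psd_op_sum_def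
    proof
      fix v :: "(complex^'n^'n) \<times> (complex^'m^'m)"
      obtain A B where v: "v = (A, B)" by fastforce
      have "hs (fst v) (fst (block_op phi psi X v)) + hs (snd v) (snd (block_op phi psi X v))
          = hs A (A ** psi X + psi B) + hs B (phi A + B ** matrix_inv X)"
        by (simp add: v block_op_def Rmul_def)
      also have "\<dots> = hs (phi (cadj A ** A) - cadj (phi A) ** phi A) X
         + hs (phi A ** X + B) ((phi A ** X + B) ** matrix_inv X)"
        by (rule key[OF assms(3) X])
      finally show "cnonneg (hs (fst v) (fst (block_op phi psi X v)) + hs (snd v) (snd (block_op phi psi X v)))"
        using cnonneg_add psd_hs[OF H1[rule_format, of A] pd_psd[OF X]] hs_DY[OF pd_inv_psd[OF X]]
        by metis
    qed
  qed
next
  assume H2: "\<forall>X. pd X \<longrightarrow> psd_op_sum (block_op phi psi X)"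
  show "\<forall>K. psd (phi (cadj K ** K) - cadj (phi K) ** phi K)"
  proof
    fix K :: "complex^'n^'n"
    define F where "F = phi K"
    define P where "P = phi (cadj K ** K) - cadj F ** F"
    have cG: "cadj (phi (cadj K ** K)) = phi (cadj K ** K)"
      using assms(2) psd_AA psd_cadj unfolding positive_map_def by blast
    have cP: "cadj P = P" by (simp add: P_def cadj_diff cG cadj_mult cadj_cadj)
    have Hs: "cnonneg (hs P X)" if X: "pd X" for X
    proof -
      have "cnonneg (hs (fst (K, - (F ** X))) (fst (block_op phi psi X (K, - (F ** X))))
          + hs (snd (K, - (F ** X))) (snd (block_op phi psi X (K, - (F ** X)))))"
        using H2 X unfolding psd_op_sum_def by blast
      also have "hs (fst (K, - (F ** X))) (fst (block_op phi psi X (K, - (F ** X))))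
          + hs (snd (K, - (F ** X))) (snd (block_op phi psi X (K, - (F ** X))))
          = hs K (K ** psi X + psi (- (F ** X))) + hs (- (F ** X)) (phi K + (- (F ** X)) ** matrix_inv X)"
        by (simp add: block_op_def Rmul_def)
      also have "\<dots> = hs P X + hs (phi K ** X + - (F ** X)) ((phi K ** X + - (F ** X)) ** matrix_inv X)"
        unfolding key[OF assms(3) X] by (simp add: P_def F_def)
      also have "\<dots> = hs P X" by (simp add: F_def hs_def)
      finally show ?thesis .
    qed
    show "psd (phi (cadj K ** K) - cadj (phi K) ** phi K)"
      unfolding F_def[symmetric] P_def[symmetric] psd_qf
    proof
      fix x
      define q where "q = Re (qf P x)"
      define t where "t = Re (hs P (mat 1))"
      have ineq: "q + e * t \<ge> 0" if e: "e > 0" for e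
      proof -
        have "cnonneg (hs P (outer x + csmult (complex_of_real e) (mat 1)))" using Hs pd_eps[OF e] by blast
        then have "Re (cnj (qf P x) + complex_of_real e * hs P (mat 1)) \<ge> 0"
          by (simp add: hs_add2 hs_csmult2 hs_outer cnonneg_def)
        then show ?thesis by (simp add: q_def t_def)
      qed
      have "q \<ge> 0"
      proof (rule ccontr)
        assume "\<not> q \<ge> 0"
        then have qn: "q < 0" by simp
        show False
        proof (cases "t \<le> 0")
          case True then show False using ineq[of 1] qn by simp
        next
          case False
          have "- q / (2 * t) > 0" using qn False by (simp add: divide_neg_pos)
          then have "q + (- q / (2 * t)) * t \<ge> 0" using ineq[of "- q / (2 * t)"] by blast
          moreover have "(- q / (2 * t)) * t = - q / 2" using False by simp
          ultimately show False using qn by simp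
        qed
      qed
      moreover have "Im (qf P x) = 0" using qf_herm[OF cP, of x] by (metis Reals_cnj_iff complex_is_Real_iff)
      ultimately show "cnonneg (qf P x)" by (simp add: cnonneg_def q_def)
    qed
  qed
qed

end
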